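(* Let $n\ge 0$ and $i,j\ge -1$ be integers with $i+j=n-1$. Let $p\in\Gamma_n$ with an occurrence $p=bqa$ where $q\in\Gamma_i$. Then: 1. if $i$ is odd, then $a$ is trivial if and only if $\sigma_j(p)\le b$ (i.e. $\sigma_j(p)$, as a suffix of $p$, lies inside $b$); 2. if $i$ is even, then $a$ is a proper prefix of $\mathrm{pre}_p(\sigma_{n-1}(p))$ if and only if $\sigma_j(p)\le b$. Similarly: 1'. if $i$ is odd, then $b$ is trivial if and only if $\pi_j(p)\le a$; 2'. if $i$ is even, then $b$ is a proper suffix of $\mathrm{suf}_p(\pi_{n-1}(p))$ if and only if $\pi_j(p)\le a$.
   Context: Let $\Bbbk$ be a field, $Q=(Q_0,Q_1,s,t)$ a finite quiver, and $A=\Bbbk Q/I$ a finite-dimensional monomial algebra, i.e. $I$ is an ideal generated by paths of length at least $2$. Paths are written from right to left: a path is $p=\alpha_n\cdots\alpha_1$ with arrows $\alpha_i$ and $t(\alpha_i)=s(\alpha_{i+1})$; vertices are the paths of length $0$ (trivial paths, also denoted $1$); $qp$ denotes concatenation when $t(p)=s(q)$. Let $\mathcal B$ be the set of paths not lying in $I$. If $p=bqa$ for paths $a,b,q$, then $q$ is a divisor of $p$; we write $q\le p$ to mean that $q$ is a divisor of $p$ at a fixed position (an occurrence), and then $\mathrm{pre}_p(q):=a$, $\mathrm{suf}_p(q):=b$. If $b$ is trivial, $q$ is a suffix; if $a$ is trivial, $q$ is a prefix; proper means $q\neq p$. Inclusions $\le$ between subpaths of a fixed path refer to their positions in that path. For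 $n\ge -1$, a left $n$-ambiguity is a path $p$ with a decomposition $p=u_{-1}u_0u_1\cdots u_n$ such that $u_{-1}\in Q_0$, $u_0\in Q_1$, $u_i\in\mathcal B$ for all $i$, and for every $0\le i\le n-1$, $u_iu_{i+1}\in I$ while no proper suffix of $u_iu_{i+1}$ lies in $I$ (one writes $p=u_0\cdots u_n$). A right $n$-ambiguity is a path with a decomposition $p=v_n\cdots v_0v_{-1}$ with $v_{-1}\in Q_0$, $v_0\in Q_1$, $v_i\in\mathcal B$, and for $0\le i\le n-1$, $v_{i+1}v_i\in I$ while no proper prefix of $v_{i+1}v_i$ lies in $I$. A path is a left $n$-ambiguity iff it is a right $n$-ambiguity; such paths are called $n$-ambiguities, and $\Gamma_n$ denotes their set. Both decompositions of an $n$-ambiguity are unique. For $p\in\Gamma_n$ with left decomposition $u_0\cdots u_n$ and right decomposition $v_n\cdots v_0$, and $-1\le m\le n$, set $\sigma_m(p):=u_0\cdots u_m$ (a suffix of $p$ which is an $m$-ambiguity) and $\pi_m(p):=v_m\cdots v_0$ (a prefix of $p$ which is an $m$-ambiguity). *)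

theory Defs
  imports Main
begin

record ('v, 'a) quiver =
  verts :: "'v set"
  arrs  :: "'a set"
  src   :: "'a \<Rightarrow> 'v"
  tgt   :: "'a \<Rightarrow> 'v"

(* A path is represented as (start vertex, list of arrows in order of traversal).
   The path alpha_n ... alpha_1 (written right to left) is (s alpha_1, [alpha_1, ..., alpha_n]);
   the trivial path at vertex v is (v, []). *)
type_synonym ('v, 'a) path = "'v \<times> 'a list"

definition is_path :: "('v, 'a) quiver \<Rightarrow> ('v, 'a) path \<Rightarrow> bool" where
  "is_path Q p \<longleftrightarrow> fst p \<in> verts Q \<and> set (snd p) \<subseteq> arrs Q
     \<and> (snd p \<noteq> [] \<longrightarrow> src Q (hd (snd p)) = fst p)
     \<and> (\<forall>k. Suc k < length (snd p) \<longrightarrow> tgt Q (snd p ! k) = src Q (snd p ! Suc k))"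

definition plen :: "('v, 'a) path \<Rightarrow> nat" where
  "plen p = length (snd p)"

(* vertex of p at position k (k = number of arrows traversed before it) *)
definition vertex_at :: "('v, 'a) quiver \<Rightarrow> ('v, 'a) path \<Rightarrow> nat \<Rightarrow> 'v" where
  "vertex_at Q p k = (if k = 0 then fst p else tgt Q (snd p ! (k - 1)))"

definition is_quiver :: "('v, 'a) quiver \<Rightarrow> bool" where
  "is_quiver Q \<longleftrightarrow> finite (verts Q) \<and> finite (arrs Q)
     \<and> (\<forall>\<alpha>\<in>arrs Q. src Q \<alpha> \<in> verts Q \<and> tgt Q \<alpha> \<in> verts Q)"

(* The monomial ideal I generated by a set R of paths (arrow lists) of length >= 2:
   a path lies in I iff it has a divisor (contiguous subpath) belonging to R. *)
definition in_I :: "'a list set \<Rightarrow> 'a list \<Rightarrow> bool" where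
  "in_I R xs \<longleftrightarrow> (\<exists>r\<in>R. \<exists>u w. xs = u @ r @ w)"

definition basis_paths :: "('v, 'a) quiver \<Rightarrow> 'a list set \<Rightarrow> ('v, 'a) path set" where
  "basis_paths Q R = {p. is_path Q p \<and> \<not> in_I R (snd p)}"

definition fd_monomial :: "('v, 'a) quiver \<Rightarrow> 'a list set \<Rightarrow> bool" where
  "fd_monomial Q R \<longleftrightarrow> is_quiver Q
     \<and> (\<forall>r\<in>R. 2 \<le> length r \<and> r \<noteq> [] \<and> is_path Q (src Q (hd r), r))
     \<and> finite (basis_paths Q R)"

(* Left decomposition p = u_{-1} u_0 u_1 ... u_n; us = [u_0, ..., u_n] (arrow lists),
   u_{-1} is the vertex t(p). Traversal order: u_n first, u_0 last. *)
definition left_dec :: "('v, 'a) quiver \<Rightarrow> 'a list set \<Rightarrow> ('v, 'a) path \<Rightarrow> 'a list list \<Rightarrow> bool" where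
  "left_dec Q R p us \<longleftrightarrow> is_path Q p \<and> snd p = concat (rev us)
     \<and> (us \<noteq> [] \<longrightarrow> length (us ! 0) = 1)
     \<and> (\<forall>i<length us. \<not> in_I R (us ! i))
     \<and> (\<forall>i. Suc i < length us \<longrightarrow>
           in_I R (us ! Suc i @ us ! i)
         \<and> (\<forall>k. 0 < k \<and> k \<le> length (us ! Suc i @ us ! i) \<longrightarrow>
                 \<not> in_I R (drop k (us ! Suc i @ us ! i))))"

(* Right decomposition p = v_n ... v_0 v_{-1}; vs = [v_0, ..., v_n] (arrow lists),
   v_{-1} is the vertex s(p). Traversal order: v_0 first, v_n last. *)
definition right_dec :: "('v, 'a) quiver \<Rightarrow> 'a list set \<Rightarrow> ('v, 'a) path \<Rightarrow> 'a list list \<Rightarrow> bool" where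
  "right_dec Q R p vs \<longleftrightarrow> is_path Q p \<and> snd p = concat vs
     \<and> (vs \<noteq> [] \<longrightarrow> length (vs ! 0) = 1)
     \<and> (\<forall>i<length vs. \<not> in_I R (vs ! i))
     \<and> (\<forall>i. Suc i < length vs \<longrightarrow>
           in_I R (vs ! i @ vs ! Suc i)
         \<and> (\<forall>k. k < length (vs ! i @ vs ! Suc i) \<longrightarrow>
                 \<not> in_I R (take k (vs ! i @ vs ! Suc i))))"

definition Gamma :: "('v, 'a) quiver \<Rightarrow> 'a list set \<Rightarrow> int \<Rightarrow> ('v, 'a) path set" where
  "Gamma Q R n = {p. n \<ge> -1 \<and> (\<exists>us. length us = nat (n + 1) \<and> left_dec Q R p us)}"

(* sigma_m(p) = u_0 ... u_m, for p in Gamma_n *)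
definition sigma :: "('v, 'a) quiver \<Rightarrow> 'a list set \<Rightarrow> int \<Rightarrow> int \<Rightarrow> ('v, 'a) path \<Rightarrow> ('v, 'a) path" where
  "sigma Q R n m p =
     (let us = (THE us. length us = nat (n + 1) \<and> left_dec Q R p us);
          xs = concat (rev (take (nat (m + 1)) us))
      in (vertex_at Q p (plen p - length xs), xs))"

(* pi_m(p) = v_m ... v_0, for p in Gamma_n *)
definition pi :: "('v, 'a) quiver \<Rightarrow> 'a list set \<Rightarrow> int \<Rightarrow> int \<Rightarrow> ('v, 'a) path \<Rightarrow> ('v, 'a) path" where
  "pi Q R n m p =
     (let vs = (THE vs. length vs = nat (n + 1) \<and> right_dec Q R p vs)
      in (fst p, concat (take (nat (m + 1)) vs)))"

(* q occurs in p at position k, i.e. p = b q a with a = first k arrows of p *)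
definition occurs_at :: "('v, 'a) quiver \<Rightarrow> ('v, 'a) path \<Rightarrow> ('v, 'a) path \<Rightarrow> nat \<Rightarrow> bool" where
  "occurs_at Q p q k \<longleftrightarrow> k + plen q \<le> plen p
     \<and> take (plen q) (drop k (snd p)) = snd q \<and> vertex_at Q p k = fst q"

definition pre_at :: "('v, 'a) path \<Rightarrow> nat \<Rightarrow> ('v, 'a) path" where
  "pre_at p k = (fst p, take k (snd p))"

definition suf_at :: "('v, 'a) quiver \<Rightarrow> ('v, 'a) path \<Rightarrow> ('v, 'a) path \<Rightarrow> nat \<Rightarrow> ('v, 'a) path" where
  "suf_at Q p q k = (vertex_at Q p (k + plen q), drop (k + plen q) (snd p))"

(* inclusion of subpaths of a fixed path by position: the occurrence of x at position k1
   lies inside the occurrence of y at position k2 *)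
definition occ_le :: "('v, 'a) path \<Rightarrow> nat \<Rightarrow> ('v, 'a) path \<Rightarrow> nat \<Rightarrow> bool" where
  "occ_le x k1 y k2 \<longleftrightarrow> k2 \<le> k1 \<and> k1 + plen x \<le> k2 + plen y"

definition proper_prefix :: "('v, 'a) path \<Rightarrow> ('v, 'a) path \<Rightarrow> bool" where
  "proper_prefix x y \<longleftrightarrow> fst x = fst y \<and> (\<exists>w. w \<noteq> [] \<and> snd y = snd x @ w)"

definition proper_suffix :: "('v, 'a) quiver \<Rightarrow> ('v, 'a) path \<Rightarrow> ('v, 'a) path \<Rightarrow> bool" where
  "proper_suffix Q x y \<longleftrightarrow> vertex_at Q x (plen x) = vertex_at Q y (plen y)
     \<and> (\<exists>w. w \<noteq> [] \<and> snd y = w @ snd x)"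

end

theory Submission
  imports Defs
begin


definition monoI :: "(nat \<Rightarrow> nat \<Rightarrow> bool) \<Rightarrow> bool" where
 "monoI I \<longleftrightarrow> (\<forall>a b s e. a \<le> s \<longrightarrow> e \<le> b \<longrightarrow> I s e \<longrightarrow> I a b)"

definition LC :: "(nat \<Rightarrow> nat \<Rightarrow> bool) \<Rightarrow> nat \<Rightarrow> (nat \<Rightarrow> nat) \<Rightarrow> bool" where
 "LC I P c \<longleftrightarrow> (\<forall>m<P. c (Suc m) < c m \<and> \<not> I (c (Suc m)) (c m))
    \<and> (\<forall>m. Suc (Suc m) \<le> P \<longrightarrow> I (c (Suc (Suc m))) (c m) \<and> \<not> I (Suc (c (Suc (Suc m)))) (c m))"

definition RC :: "(nat \<Rightarrow> nat \<Rightarrow> bool) \<Rightarrow> nat \<Rightarrow> (nat \<Rightarrow> nat) \<Rightarrow> bool" where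
 "RC I P d \<longleftrightarrow> (\<forall>m<P. d m < d (Suc m) \<and> \<not> I (d m) (d (Suc m)))
    \<and> (\<forall>m. Suc (Suc m) \<le> P \<longrightarrow> I (d m) (d (Suc (Suc m))) \<and> \<not> I (d m) (d (Suc (Suc m)) - 1))"

lemma monoD: "monoI I \<Longrightarrow> a \<le> s \<Longrightarrow> e \<le> b \<Longrightarrow> I s e \<Longrightarrow> I a b"
  unfolding monoI_def by blast

lemma L_up:
  assumes mo: "monoI I" and c: "LC I P c" and x: "LC I Q x"
    and "x m \<le> c t" "m + 2 \<le> Q" "t + 2 \<le> P"
  shows "x (m+2) \<le> c (t+2)"
proof (rule ccontr)
  assume h: "\<not> ?thesis"
  have hI: "I (x (Suc (Suc m))) (x m)" using x assms(5) unfolding LC_def by auto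
  have "I (Suc (c (Suc (Suc t)))) (c t)" by (rule monoD[OF mo _ _ hI]) (use h assms(4) in auto)
  thus False using c assms(6) unfolding LC_def by auto
qed

lemma L_low:
  assumes mo: "monoI I" and c: "LC I P c" and x: "LC I Q x"
    and "c t \<le> x m" "m + 2 \<le> Q" "t + 2 \<le> P"
  shows "c (t+2) \<le> x (m+2)"
proof (rule ccontr)
  assume h: "\<not> ?thesis"
  have hI: "I (c (Suc (Suc t))) (c t)" using c assms(6) unfolding LC_def by auto
  have "I (Suc (x (Suc (Suc m)))) (x m)" by (rule monoD[OF mo _ _ hI]) (use h assms(4) in auto)
  thus False using x assms(5) unfolding LC_def by auto
qed

lemma R_up:
  assumes mo: "monoI I" and d: "RC I P d" and y: "RC I Q y"
    and "y m \<le> d t" "m + 2 \<le> Q" "t + 2 \<le> P"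
  shows "y (m+2) \<le> d (t+2)"
proof (rule ccontr)
  assume h: "\<not> ?thesis"
  have hI: "I (d t) (d (Suc (Suc t)))" using d assms(6) unfolding RC_def by auto
  have "I (y m) (y (Suc (Suc m)) - 1)" by (rule monoD[OF mo _ _ hI]) (use h assms(4) in auto)
  thus False using y assms(5) unfolding RC_def by auto
qed

lemma R_low:
  assumes mo: "monoI I" and d: "RC I P d" and y: "RC I Q y"
    and "d t \<le> y m" "m + 2 \<le> Q" "t + 2 \<le> P"
  shows "d (t+2) \<le> y (m+2)"
proof (rule ccontr)
  assume h: "\<not> ?thesis"
  have hI: "I (y m) (y (Suc (Suc m)))" using y assms(5) unfolding RC_def by auto
  have "I (d t) (d (Suc (Suc t)) - 1)" by (rule monoD[OF mo _ _ hI]) (use h assms(4) in auto)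
  thus False using d assms(6) unfolding RC_def by auto
qed

lemma L_up_it:
  assumes mo: "monoI I" and c: "LC I P c" and x: "LC I Q x" and "x m \<le> c t"
  shows "m + 2*s \<le> Q \<Longrightarrow> t + 2*s \<le> P \<Longrightarrow> x (m+2*s) \<le> c (t+2*s)"
proof (induction s)
  case 0 then show ?case using assms(4) by simp
next
  case (Suc s)
  have "x (m+2*s) \<le> c (t+2*s)" using Suc by simp
  from L_up[OF mo c x this] Suc.prems show ?case by (simp add: add.assoc)
qed

lemma L_low_it:
  assumes mo: "monoI I" and c: "LC I P c" and x: "LC I Q x" and "c t \<le> x m"
  shows "m + 2*s \<le> Q \<Longrightarrow> t + 2*s \<le> P \<Longrightarrow> c (t+2*s) \<le> x (m+2*s)"
proof (induction s)
  case 0 then show ?case using assms(4) by simp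
next
  case (Suc s)
  have "c (t+2*s) \<le> x (m+2*s)" using Suc by simp
  from L_low[OF mo c x this] Suc.prems show ?case by (simp add: add.assoc)
qed

lemma R_up_it:
  assumes mo: "monoI I" and d: "RC I P d" and y: "RC I Q y" and "y m \<le> d t"
  shows "m + 2*s \<le> Q \<Longrightarrow> t + 2*s \<le> P \<Longrightarrow> y (m+2*s) \<le> d (t+2*s)"
proof (induction s)
  case 0 then show ?case using assms(4) by simp
next
  case (Suc s)
  have "y (m+2*s) \<le> d (t+2*s)" using Suc by simp
  from R_up[OF mo d y this] Suc.prems show ?case by (simp add: add.assoc)
qed

lemma R_low_it:
  assumes mo: "monoI I" and d: "RC I P d" and y: "RC I Q y" and "d t \<le> y m"
  shows "m + 2*s \<le> Q \<Longrightarrow> t + 2*s \<le> P \<Longrightarrow> d (t+2*s) \<le> y (m+2*s)"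
proof (induction s)
  case 0 then show ?case using assms(4) by simp
next
  case (Suc s)
  have "d (t+2*s) \<le> y (m+2*s)" using Suc by simp
  from R_low[OF mo d y this] Suc.prems show ?case by (simp add: add.assoc)
qed

lemma left_main:
  assumes mo: "monoI I" and c: "LC I P c" and cP: "c P = 0"
    and x: "LC I Q x" and x0: "x 0 = E" and xQ: "x Q = k" and x1: "1 \<le> Q \<Longrightarrow> Suc (x 1) = E"
    and QP: "Q \<le> P"
  shows "(even Q \<longrightarrow> (k = 0 \<longleftrightarrow> E \<le> c (P - Q)))
       \<and> (odd Q \<longrightarrow> (k < c (P - 1) \<longleftrightarrow> E \<le> c (P - Q)))"
proof (intro conjI impI)
  assume "even Q"
  then obtain s where Qs: "Q = 2*s" by blast
  show "k = 0 \<longleftrightarrow> E \<le> c (P - Q)"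
  proof
    assume "E \<le> c (P - Q)"
    hence "x 0 \<le> c (P - Q)" using x0 by simp
    from L_up_it[OF mo c x this, of s] Qs QP have "x (0 + 2*s) \<le> c (P - Q + 2*s)" by simp
    thus "k = 0" using Qs QP xQ cP by simp
  next
    assume k0: "k = 0"
    show "E \<le> c (P - Q)"
    proof (rule ccontr)
      assume h: "\<not> E \<le> c (P - Q)"
      show False
      proof (cases s)
        case 0
        then show False using h Qs x0 xQ k0 cP by simp
      next
        case (Suc s')
        have "c (P - Q) \<le> x 1" using x1 h Qs Suc by simp
        from L_low_it[OF mo c x this, of s'] Qs Suc QP
        have "c (P - Q + 2*s') \<le> x (1 + 2*s')" by simp
        moreover have "P - Q + 2*s' = P - 2" "1 + 2*s' = Q - 1" using Qs Suc QP by auto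
        ultimately have A: "c (P-2) \<le> x (Q - 1)" by simp
        have "I (c (Suc (Suc (P-2)))) (c (P-2))" using c Qs Suc QP unfolding LC_def by auto
        hence B: "I (c P) (c (P-2))" using Qs Suc QP by (simp add: Suc_diff_Suc numeral_2_eq_2)
        have "I (x Q) (x (Q-1))" by (rule monoD[OF mo _ _ B]) (use A xQ k0 cP in auto)
        moreover have "\<not> I (x (Suc (Q-1))) (x (Q-1))" using x Qs Suc unfolding LC_def by auto
        ultimately show False using Qs Suc by simp
      qed
    qed
  qed
next
  assume "odd Q"
  then obtain s where Qs: "Q = 2*s + 1" using oddE by blast
  show "k < c (P - 1) \<longleftrightarrow> E \<le> c (P - Q)"
  proof
    assume "E \<le> c (P - Q)"
    hence "x 0 \<le> c (P - Q)" using x0 by simp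
    from L_up_it[OF mo c x this, of s] Qs QP have "x (0 + 2*s) \<le> c (P - Q + 2*s)" by simp
    moreover have "P - Q + 2*s = P - 1" using Qs QP by auto
    moreover have "x (Suc (2*s)) < x (2*s)" using x Qs unfolding LC_def by auto
    ultimately show "k < c (P - 1)" using xQ Qs by simp
  next
    assume k: "k < c (P - 1)"
    show "E \<le> c (P - Q)"
    proof (rule ccontr)
      assume h: "\<not> E \<le> c (P - Q)"
      have "c (P - Q) \<le> x 1" using x1 h Qs by simp
      from L_low_it[OF mo c x this, of s] Qs QP
      have "c (P - Q + 2*s) \<le> x (1 + 2*s)" by simp
      moreover have "P - Q + 2*s = P - 1" using Qs QP by auto
      ultimately show False using k xQ Qs by simp
    qed
  qed
qed

lemma right_main:
  assumes mo: "monoI I" and d: "RC I P d" and dP: "d P = N"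
    and y: "RC I Q y" and y0: "y 0 = k" and yQ: "y Q = E" and y1: "1 \<le> Q \<Longrightarrow> y 1 = Suc k"
    and QP: "Q \<le> P" and EN: "E \<le> N"
  shows "(even Q \<longrightarrow> (E = N \<longleftrightarrow> d (P - Q) \<le> k))
       \<and> (odd Q \<longrightarrow> (d (P - 1) < E \<longleftrightarrow> d (P - Q) \<le> k))"
proof (intro conjI impI)
  assume "even Q"
  then obtain s where Qs: "Q = 2*s" by blast
  show "E = N \<longleftrightarrow> d (P - Q) \<le> k"
  proof
    assume "d (P - Q) \<le> k"
    hence "d (P - Q) \<le> y 0" using y0 by simp
    from R_low_it[OF mo d y this, of s] Qs QP have "d (P - Q + 2*s) \<le> y (0 + 2*s)" by simp
    thus "E = N" using Qs QP yQ dP EN by simp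
  next
    assume EN: "E = N"
    show "d (P - Q) \<le> k"
    proof (rule ccontr)
      assume h: "\<not> d (P - Q) \<le> k"
      show False
      proof (cases s)
        case 0
        then show False using h Qs y0 yQ EN dP by simp
      next
        case (Suc s')
        have "y 1 \<le> d (P - Q)" using y1 h Qs Suc by simp
        from R_up_it[OF mo d y this, of s'] Qs Suc QP
        have "y (1 + 2*s') \<le> d (P - Q + 2*s')" by simp
        moreover have "P - Q + 2*s' = P - 2" "1 + 2*s' = Q - 1" using Qs Suc QP by auto
        ultimately have A: "y (Q - 1) \<le> d (P-2)" by simp
        have "I (d (P-2)) (d (Suc (Suc (P-2))))" using d Qs Suc QP unfolding RC_def by auto
        hence B: "I (d (P-2)) (d P)" using Qs Suc QP by (simp add: Suc_diff_Suc numeral_2_eq_2)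
        have "I (y (Q-1)) (y Q)" by (rule monoD[OF mo _ _ B]) (use A yQ EN dP in auto)
        moreover have "\<not> I (y (Q-1)) (y (Suc (Q-1)))" using y Qs Suc unfolding RC_def by auto
        ultimately show False using Qs Suc by simp
      qed
    qed
  qed
next
  assume "odd Q"
  then obtain s where Qs: "Q = 2*s + 1" using oddE by blast
  show "d (P - 1) < E \<longleftrightarrow> d (P - Q) \<le> k"
  proof
    assume "d (P - Q) \<le> k"
    hence "d (P - Q) \<le> y 0" using y0 by simp
    from R_low_it[OF mo d y this, of s] Qs QP have "d (P - Q + 2*s) \<le> y (0 + 2*s)" by simp
    moreover have "P - Q + 2*s = P - 1" using Qs QP by auto
    moreover have "y (2*s) < y (Suc (2*s))" using y Qs unfolding RC_def by auto
    ultimately show "d (P - 1) < E" using yQ Qs by simp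
  next
    assume k: "d (P - 1) < E"
    show "d (P - Q) \<le> k"
    proof (rule ccontr)
      assume h: "\<not> d (P - Q) \<le> k"
      have "y 1 \<le> d (P - Q)" using y1 h Qs by simp
      from R_up_it[OF mo d y this, of s] Qs QP
      have "y (1 + 2*s) \<le> d (P - Q + 2*s)" by simp
      moreover have "P - Q + 2*s = P - 1" using Qs QP by auto
      ultimately show False using k yQ Qs by simp
    qed
  qed
qed

fun dseq :: "(nat \<Rightarrow> nat \<Rightarrow> bool) \<Rightarrow> nat \<Rightarrow> nat \<Rightarrow> nat" where
  "dseq I s 0 = s"
| "dseq I s (Suc 0) = Suc s"
| "dseq I s (Suc (Suc m)) = (LEAST b. I (dseq I s m) b)"

lemma LC_to_RC:
  assumes mo: "monoI I" and c: "LC I P c" and cP: "c P = s" and c0: "c 0 = e"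
    and c1: "1 \<le> P \<Longrightarrow> Suc (c 1) = e"
  shows "RC I P (dseq I s) \<and> dseq I s P = e"
proof -
  define d where "d = dseq I s"
  have cs: "\<And>m. m < P \<Longrightarrow> c (Suc m) < c m \<and> \<not> I (c (Suc m)) (c m)"
    using c unfolding LC_def by blast
  have cm: "\<And>m. Suc (Suc m) \<le> P \<Longrightarrow> I (c (Suc (Suc m))) (c m) \<and> \<not> I (Suc (c (Suc (Suc m)))) (c m)"
    using c unfolding LC_def by blast
  have d0: "d 0 = s" and d1: "d (Suc 0) = Suc s" and dSS: "\<And>m. d (Suc (Suc m)) = (LEAST b. I (d m) b)"
    unfolding d_def by auto
  define A where "A m \<longleftrightarrow> (m \<le> P \<longrightarrow> d m \<le> c (P - m))" for m
  define B where "B m \<longleftrightarrow> (m < P \<longrightarrow> c (P - m) < d (Suc m))" for m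
  have step: "A (Suc (Suc m)) \<and> B (Suc (Suc m))" if Am: "A m" and Bm: "B m" and Am1: "A (Suc m)" for m
  proof
    show "A (Suc (Suc m))" unfolding A_def
    proof
      assume h: "Suc (Suc m) \<le> P"
      have e1: "Suc (Suc (P - Suc (Suc m))) = P - m" using h by simp
      have "I (c (Suc (Suc (P - Suc (Suc m))))) (c (P - Suc (Suc m)))" using cm[of "P - Suc (Suc m)"] h by simp
      hence hI: "I (c (P - m)) (c (P - Suc (Suc m)))" using e1 by simp
      have "I (d m) (c (P - Suc (Suc m)))" by (rule monoD[OF mo _ _ hI]) (use Am h in \<open>auto simp: A_def\<close>)
      thus "d (Suc (Suc m)) \<le> c (P - Suc (Suc m))" unfolding dSS by (rule Least_le)
    qed
    show "B (Suc (Suc m))" unfolding B_def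
    proof
      assume h: "Suc (Suc m) < P"
      have e1: "Suc (Suc (P - Suc (Suc (Suc m)))) = P - Suc m" using h by simp
      have "I (c (Suc (Suc (P - Suc (Suc (Suc m)))))) (c (P - Suc (Suc (Suc m))))" using cm[of "P - Suc (Suc (Suc m))"] h by simp
      hence hI: "I (c (P - Suc m)) (c (P - Suc (Suc (Suc m))))" using e1 by simp
      have ex: "I (d (Suc m)) (c (P - Suc (Suc (Suc m))))" by (rule monoD[OF mo _ _ hI]) (use Am1 h in \<open>auto simp: A_def\<close>)
      define b0 where "b0 = (LEAST b. I (d (Suc m)) b)"
      have Ib0: "I (d (Suc m)) b0" unfolding b0_def using ex by (rule LeastI)
      show "c (P - Suc (Suc m)) < d (Suc (Suc (Suc m)))"
      proof (rule ccontr)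
        assume "\<not> ?thesis"
        hence "b0 \<le> c (P - Suc (Suc m))" using dSS b0_def by simp
        have e2: "Suc (Suc (P - Suc (Suc m))) = P - m" using h by simp
        have "I (Suc (c (P - m))) (c (P - Suc (Suc m)))" by (rule monoD[OF mo _ _ Ib0]) (use Bm h \<open>b0 \<le> _\<close> in \<open>auto simp: B_def\<close>)
        moreover have "\<not> I (Suc (c (Suc (Suc (P - Suc (Suc m)))))) (c (P - Suc (Suc m)))" using cm[of "P - Suc (Suc m)"] h by simp
        ultimately show False using e2 by simp
      qed
    qed
  qed
  have base: "A 0 \<and> B 0 \<and> A 1 \<and> B 1"
  proof (intro conjI)
    show "A 0" unfolding A_def using d0 cP by simp
    show "B 0" unfolding B_def using d1 cP by simp
    show "A 1" unfolding A_def
    proof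
      assume "1 \<le> P"
      then have "c (Suc (P - 1)) < c (P - 1)" using cs[of "P-1"] by simp
      thus "d 1 \<le> c (P - 1)" using d1 cP \<open>1 \<le> P\<close> by simp
    qed
    show "B 1" unfolding B_def
    proof
      assume h: "1 < P"
      have "I (c (Suc (Suc (P - 2)))) (c (P - 2))" using cm[of "P - 2"] h by simp
      hence hI: "I s (c (P - 2))" using h cP by (simp add: Suc_diff_Suc numeral_2_eq_2)
      define b0 where "b0 = (LEAST b. I s b)"
      have Ib0: "I s b0" unfolding b0_def using hI by (rule LeastI)
      show "c (P - 1) < d (Suc 1)"
      proof (rule ccontr)
        assume "\<not> ?thesis"
        hence "b0 \<le> c (P - 1)" using dSS[of 0] d0 b0_def by simp
        have "I (c P) (c (P - 1))" by (rule monoD[OF mo _ _ Ib0]) (use cP \<open>b0 \<le> _\<close> in auto)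
        moreover have "\<not> I (c (Suc (P-1))) (c (P - 1))" using cs[of "P-1"] h by simp
        ultimately show False using h by simp
      qed
    qed
  qed
  have all: "A m \<and> B m \<and> A (Suc m) \<and> B (Suc m)" for m
  proof (induction m)
    case 0 then show ?case using base by simp
  next
    case (Suc m) then show ?case using step[of m] by simp
  qed
  have RC1: "d m < d (Suc m) \<and> \<not> I (d m) (d (Suc m))" if mP: "m < P" for m
  proof
    show "d m < d (Suc m)" using all[of m] mP unfolding A_def B_def by auto
    show "\<not> I (d m) (d (Suc m))"
    proof (cases m)
      case 0
      have "Suc s \<le> c (P - 1)" using all[of 0] mP d1 unfolding A_def by auto
      show ?thesis
      proof
        assume hI: "I (d m) (d (Suc m))"
        have "I (c P) (c (P - 1))" by (rule monoD[OF mo _ _ hI]) (use 0 d0 d1 cP \<open>Suc s \<le> _\<close> in auto)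
        moreover have "\<not> I (c (Suc (P-1))) (c (P - 1))" using cs[of "P-1"] mP by simp
        ultimately show False using mP by simp
      qed
    next
      case (Suc m')
      have b1: "Suc (c (P - m')) \<le> d m" using all[of m'] Suc mP unfolding B_def by auto
      have b2: "d (Suc m) \<le> c (P - Suc m)" using all[of m] mP unfolding A_def by auto
      have e1: "Suc (Suc (P - Suc m)) = P - m'" using Suc mP by simp
      show ?thesis
      proof
        assume hI: "I (d m) (d (Suc m))"
        have "I (Suc (c (P - m'))) (c (P - Suc m))" by (rule monoD[OF mo _ _ hI]) (use b1 b2 in auto)
        moreover have "\<not> I (Suc (c (Suc (Suc (P - Suc m))))) (c (P - Suc m))" using cm[of "P - Suc m"] Suc mP by simp
        ultimately show False using e1 by simp
      qed
    qed
  qed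
  have RC2: "I (d m) (d (Suc (Suc m))) \<and> \<not> I (d m) (d (Suc (Suc m)) - 1)" if h: "Suc (Suc m) \<le> P" for m
  proof -
    have e1: "Suc (Suc (P - Suc (Suc m))) = P - m" using h by simp
    have "I (c (Suc (Suc (P - Suc (Suc m))))) (c (P - Suc (Suc m)))" using cm[of "P - Suc (Suc m)"] h by simp
    hence hI: "I (c (P - m)) (c (P - Suc (Suc m)))" using e1 by simp
    have ex: "I (d m) (c (P - Suc (Suc m)))" by (rule monoD[OF mo _ _ hI]) (use all[of m] h in \<open>auto simp: A_def\<close>)
    have "I (d m) (d (Suc (Suc m)))" unfolding dSS using ex by (rule LeastI)
    moreover have "0 < d (Suc (Suc m))" using RC1[of "Suc m"] h by simp
    hence "\<not> I (d m) (d (Suc (Suc m)) - 1)" unfolding dSS by (metis diff_less not_less_Least zero_less_one dSS)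
    ultimately show ?thesis by simp
  qed
  have dPe: "d P = e"
  proof (cases P)
    case 0 then show ?thesis using d0 cP c0 by simp
  next
    case (Suc P')
    have "d P \<le> c 0" using all[of P] unfolding A_def by simp
    moreover have "c 1 < d P" using all[of P'] Suc unfolding B_def by simp
    ultimately show ?thesis using c0 c1 Suc by simp
  qed
  show ?thesis using RC1 RC2 dPe unfolding RC_def d_def by blast
qed

lemma LC_unique:
  assumes mo: "monoI I" and c: "LC I P c" and c': "LC I P c'" and "c 0 = c' 0"
    and "1 \<le> P \<Longrightarrow> c 1 = c' 1"
  shows "m \<le> P \<Longrightarrow> c m = c' m"
proof (induction m rule: less_induct)
  case (less m)
  show ?case
  proof (cases m)
    case 0 then show ?thesis using assms(4) by simp
  next
    case (Suc m')
    show ?thesis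
    proof (cases m')
      case 0 then show ?thesis using assms(5) Suc less.prems by simp
    next
      case (Suc m'')
      have eq: "c m'' = c' m''" using less.IH[of m''] \<open>m = Suc m'\<close> Suc less.prems by simp
      have h1: "I (c m) (c m'') \<and> \<not> I (Suc (c m)) (c m'')" using c less.prems \<open>m = Suc m'\<close> Suc unfolding LC_def by blast
      have h2: "I (c' m) (c m'') \<and> \<not> I (Suc (c' m)) (c m'')" using c' less.prems \<open>m = Suc m'\<close> Suc eq unfolding LC_def by auto
      show ?thesis
      proof (rule ccontr)
        assume "c m \<noteq> c' m"
        hence "c m < c' m \<or> c' m < c m" by linarith
        thus False
        proof
          assume "c m < c' m"
          have "I (Suc (c m)) (c m'')" by (rule monoD[OF mo _ _ conjunct1[OF h2]]) (use \<open>c m < c' m\<close> in auto)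
          thus False using h1 by simp
        next
          assume "c' m < c m"
          have "I (Suc (c' m)) (c m'')" by (rule monoD[OF mo _ _ conjunct1[OF h1]]) (use \<open>c' m < c m\<close> in auto)
          thus False using h2 by simp
        qed
      qed
    qed
  qed
qed

lemma RC_unique:
  assumes mo: "monoI I" and d: "RC I P d" and d': "RC I P d'" and "d 0 = d' 0"
    and "1 \<le> P \<Longrightarrow> d 1 = d' 1"
  shows "m \<le> P \<Longrightarrow> d m = d' m"
proof (induction m rule: less_induct)
  case (less m)
  show ?case
  proof (cases m)
    case 0 then show ?thesis using assms(4) by simp
  next
    case (Suc m')
    show ?thesis
    proof (cases m')
      case 0 then show ?thesis using assms(5) Suc less.prems by simp
    next
      case (Suc m'')
      have eq: "d m'' = d' m''" using less.IH[of m''] \<open>m = Suc m'\<close> Suc less.prems by simp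
      have h1: "I (d m'') (d m) \<and> \<not> I (d m'') (d m - 1)" using d less.prems \<open>m = Suc m'\<close> Suc unfolding RC_def by blast
      have h2: "I (d m'') (d' m) \<and> \<not> I (d m'') (d' m - 1)" using d' less.prems \<open>m = Suc m'\<close> Suc eq unfolding RC_def by auto
      show ?thesis
      proof (rule ccontr)
        assume "d m \<noteq> d' m"
        hence "d m < d' m \<or> d' m < d m" by linarith
        thus False
        proof
          assume "d m < d' m"
          have "I (d m'') (d' m - 1)" by (rule monoD[OF mo _ _ conjunct1[OF h1]]) (use \<open>d m < d' m\<close> in auto)
          thus False using h2 by simp
        next
          assume "d' m < d m"
          have "I (d m'') (d m - 1)" by (rule monoD[OF mo _ _ conjunct1[OF h2]]) (use \<open>d' m < d m\<close> in auto)
          thus False using h1 by simp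
        qed
      qed
    qed
  qed
qed



definition sub :: "'a list \<Rightarrow> nat \<Rightarrow> nat \<Rightarrow> 'a list" where
  "sub w s e = take (e - s) (drop s w)"

definition Iw :: "'a list set \<Rightarrow> 'a list \<Rightarrow> nat \<Rightarrow> nat \<Rightarrow> bool" where
  "Iw R w s e = in_I R (sub w s e)"

lemma sub_split: "a \<le> b \<Longrightarrow> b \<le> c \<Longrightarrow> sub w a c = sub w a b @ sub w b c"
proof -
  assume "a \<le> b" "b \<le> c"
  hence e: "c - a = (b - a) + (c - b)" by simp
  have "take (c - a) (drop a w) = take (b - a) (drop a w) @ take (c - b) (drop (b - a) (drop a w))"
    unfolding e by (rule take_add)
  moreover have "drop (b - a) (drop a w) = drop b w" using \<open>a \<le> b\<close> by simp
  ultimately show ?thesis unfolding sub_def by simp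
qed

lemma in_I_factor: "in_I R xs \<Longrightarrow> in_I R (u @ xs @ v)"
  unfolding in_I_def by (metis append.assoc)

lemma in_I_nil: "\<forall>r\<in>R. r \<noteq> [] \<Longrightarrow> \<not> in_I R []"
  unfolding in_I_def by auto

lemma mono_Iw: assumes "\<forall>r\<in>R. r \<noteq> []" shows "monoI (Iw R w)"
  unfolding monoI_def
proof (intro allI impI)
  fix a b s e assume h: "a \<le> s" "e \<le> b" "Iw R w s e"
  show "Iw R w a b"
  proof (cases "s \<le> e")
    case True
    have "sub w a b = sub w a s @ sub w s e @ sub w e b"
      using h True by (metis sub_split le_trans)
    thus ?thesis using h(3) in_I_factor unfolding Iw_def by metis
  next
    case False
    hence "sub w s e = []" unfolding sub_def by simp
    thus ?thesis using h(3) in_I_nil[OF assms] unfolding Iw_def by simp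
  qed
qed

lemma length_sub: "e \<le> length w \<Longrightarrow> length (sub w s e) = e - s"
  unfolding sub_def by simp

lemma sub_drop1: "drop 1 (sub w a b) = sub w (Suc a) b"
  unfolding sub_def by (simp add: drop_take drop_drop)

lemma take_sub: "k \<le> b - a \<Longrightarrow> take k (sub w a b) = sub w a (a + k)"
  unfolding sub_def by (simp add: min_def)

lemma sub_mid:
  assumes "E \<le> length w" "sub w k E = A @ X @ B"
  shows "X = sub w (k + length A) (k + length A + length X)"
proof -
  have "drop (length A) (sub w k E) = X @ B" using assms(2) by simp
  hence "take (length X) (drop (length A) (sub w k E)) = X" by simp
  moreover have "length (sub w k E) = length A + length X + length B" using assms(2) by simp
  hence "length X \<le> E - (k + length A)" using assms(1) unfolding sub_def by simp
  ultimately show ?thesis unfolding sub_def by (simp add: drop_take drop_drop take_take min_def add.commute)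
qed

lemma sub_full: "sub w 0 (length w) = w"
  unfolding sub_def by simp

lemma length_concat_rev: "length (concat (rev xs)) = length (concat xs)"
  by (induction xs) auto

lemma concat_rev_split: "m < length us \<Longrightarrow>
  concat (rev us) = concat (rev (drop (Suc m) us)) @ us ! m @ concat (rev (take m us))"
proof -
  assume "m < length us"
  hence "us = take m us @ us ! m # drop (Suc m) us" by (simp add: id_take_nth_drop)
  hence "rev us = rev (drop (Suc m) us) @ [us ! m] @ rev (take m us)"
    by (metis rev.simps(2) rev_append append.assoc append_Cons append_Nil)
  thus ?thesis by simp
qed

lemma left_chain:
  assumes ne: "\<forall>r\<in>R. r \<noteq> []" and ld: "left_dec Q R q us" and sq: "snd q = sub w k E"
    and kE: "k \<le> E" and Ew: "E \<le> length w"
  defines "x \<equiv> \<lambda>m. E - length (concat (take m us))"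
  shows "LC (Iw R w) (length us) x \<and> x 0 = E \<and> x (length us) = k \<and> (1 \<le> length us \<longrightarrow> Suc (x 1) = E)
     \<and> (\<forall>m<length us. us ! m = sub w (x (Suc m)) (x m))"
proof -
  have cat: "concat (rev us) = sub w k E" using ld sq unfolding left_dec_def by simp
  have tot: "length (concat us) = E - k"
    using arg_cong[OF cat, of length] length_sub[OF Ew] length_concat_rev by metis
  have L_le: "length (concat (take m us)) \<le> length (concat us)" for m
  proof -
    have "concat us = concat (take m us) @ concat (drop m us)" by (metis append_take_drop_id concat_append)
    thus ?thesis by (metis le_add1 length_append)
  qed
  have LSuc: "length (concat (take (Suc m) us)) = length (concat (take m us)) + length (us ! m)" if "m < length us" for m
    using that by (simp add: take_Suc_conv_app_nth)
  have piece: "us ! m = sub w (x (Suc m)) (x m)" if mP: "m < length us" for m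
  proof -
    define A where "A = concat (rev (drop (Suc m) us))"
    define B where "B = concat (rev (take m us))"
    have spl: "sub w k E = A @ us ! m @ B" using concat_rev_split[OF mP] cat unfolding A_def B_def by simp
    have lens: "length A + length (us ! m) + length B = E - k"
      using arg_cong[OF spl, of length] length_sub[OF Ew] by simp
    have lB: "length B = length (concat (take m us))" unfolding B_def by (rule length_concat_rev)
    have "us ! m = sub w (k + length A) (k + length A + length (us ! m))" by (rule sub_mid[OF Ew spl])
    moreover have "k + length A = x (Suc m)" unfolding x_def using LSuc[OF mP] lens lB kE by simp
    moreover have "k + length A + length (us ! m) = x m" unfolding x_def using lens lB kE by simp
    ultimately show ?thesis by simp
  qed
  have nonemp: "us ! m \<noteq> []" if mP: "m < length us" for m
  proof (cases m)
    case 0 then show ?thesis using ld mP unfolding left_dec_def by auto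
  next
    case (Suc m')
    have "in_I R (us ! m @ us ! m')" "\<not> in_I R (us ! m')" using ld mP Suc unfolding left_dec_def by auto
    thus ?thesis by auto
  qed
  have xmono: "x (Suc m) \<le> x m" for m
  proof (cases "m < length us")
    case True then show ?thesis unfolding x_def using LSuc[OF True] by simp
  next
    case False then show ?thesis unfolding x_def by simp
  qed
  have LC1: "x (Suc m) < x m \<and> \<not> Iw R w (x (Suc m)) (x m)" if mP: "m < length us" for m
  proof
    have l0: "length (us ! m) > 0" using nonemp[OF mP] by simp
    have l1: "length (concat (take (Suc m) us)) \<le> E - k" using L_le tot by metis
    show "x (Suc m) < x m" unfolding x_def using LSuc[OF mP] kE l0 l1 by linarith
    show "\<not> Iw R w (x (Suc m)) (x m)" using piece[OF mP] ld mP unfolding Iw_def left_dec_def by metis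
  qed
  have LC2: "Iw R w (x (Suc (Suc m))) (x m) \<and> \<not> Iw R w (Suc (x (Suc (Suc m)))) (x m)"
    if mP: "Suc (Suc m) \<le> length us" for m
  proof -
    have eq: "sub w (x (Suc (Suc m))) (x m) = us ! Suc m @ us ! m"
      using piece[of m] piece[of "Suc m"] mP sub_split[OF xmono xmono] by simp
    have c1: "in_I R (us ! Suc m @ us ! m)" and
      c2: "\<forall>k. 0 < k \<and> k \<le> length (us ! Suc m @ us ! m) \<longrightarrow> \<not> in_I R (drop k (us ! Suc m @ us ! m))"
      using ld mP unfolding left_dec_def by auto
    have "1 \<le> length (us ! Suc m @ us ! m)" using nonemp[of m] mP by (simp add: Suc_leI)
    hence "\<not> in_I R (drop 1 (us ! Suc m @ us ! m))" using c2 by simp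
    thus ?thesis using c1 eq sub_drop1 unfolding Iw_def by metis
  qed
  have "x (length us) = k" unfolding x_def using tot kE by simp
  moreover have "1 \<le> length us \<longrightarrow> Suc (x 1) = E"
  proof
    assume "1 \<le> length us"
    hence "length (us ! 0) = 1" using ld unfolding left_dec_def by auto
    hence "length (concat (take 1 us)) = 1" using LSuc[of 0] \<open>1 \<le> length us\<close> by (cases us) auto
    moreover have "1 \<le> E - k" using L_le[of 1] tot calculation by simp
    ultimately show "Suc (x 1) = E" unfolding x_def by simp
  qed
  ultimately show ?thesis using LC1 LC2 piece unfolding LC_def x_def by simp
qed

lemma right_chain:
  assumes ne: "\<forall>r\<in>R. r \<noteq> []" and rd: "right_dec Q R p vs" and sp: "snd p = w"
  defines "y \<equiv> \<lambda>m. length (concat (take m vs))"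
  shows "RC (Iw R w) (length vs) y \<and> y 0 = 0 \<and> y (length vs) = length w \<and> (1 \<le> length vs \<longrightarrow> y 1 = 1)
     \<and> (\<forall>m<length vs. vs ! m = sub w (y m) (y (Suc m)))"
proof -
  have cat: "concat vs = w" using rd sp unfolding right_dec_def by simp
  have LSuc: "y (Suc m) = y m + length (vs ! m)" if "m < length vs" for m
    using that unfolding y_def by (simp add: take_Suc_conv_app_nth)
  have piece: "vs ! m = sub w (y m) (y (Suc m))" if mP: "m < length vs" for m
  proof -
    have "vs = take m vs @ vs ! m # drop (Suc m) vs" using mP by (simp add: id_take_nth_drop)
    hence "concat vs = concat (take m vs) @ vs ! m @ concat (drop (Suc m) vs)"
      by (metis concat.simps(2) concat_append)
    hence spl: "sub w 0 (length w) = concat (take m vs) @ vs ! m @ concat (drop (Suc m) vs)"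
      using cat sub_full by metis
    from sub_mid[OF order_refl spl] show ?thesis using LSuc[OF mP] unfolding y_def by simp
  qed
  have nonemp: "vs ! m \<noteq> []" if mP: "m < length vs" for m
  proof (cases m)
    case 0 then show ?thesis using rd mP unfolding right_dec_def by auto
  next
    case (Suc m')
    have "in_I R (vs ! m' @ vs ! m)" "\<not> in_I R (vs ! m')" using rd mP Suc unfolding right_dec_def by auto
    thus ?thesis by auto
  qed
  have RC1: "y m < y (Suc m) \<and> \<not> Iw R w (y m) (y (Suc m))" if mP: "m < length vs" for m
  proof
    show "y m < y (Suc m)" using LSuc[OF mP] nonemp[OF mP] by simp
    show "\<not> Iw R w (y m) (y (Suc m))" using piece[OF mP] rd mP unfolding Iw_def right_dec_def by metis
  qed
  have ymono: "y m \<le> y (Suc m)" for m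
  proof (cases "m < length vs")
    case True then show ?thesis using LSuc[OF True] by simp
  next
    case False then show ?thesis unfolding y_def by simp
  qed
  have RC2: "Iw R w (y m) (y (Suc (Suc m))) \<and> \<not> Iw R w (y m) (y (Suc (Suc m)) - 1)"
    if mP: "Suc (Suc m) \<le> length vs" for m
  proof -
    have eq: "sub w (y m) (y (Suc (Suc m))) = vs ! m @ vs ! Suc m"
      using piece[of m] piece[of "Suc m"] mP sub_split[OF ymono ymono] by simp
    have c1: "in_I R (vs ! m @ vs ! Suc m)" and
      c2: "\<forall>k. k < length (vs ! m @ vs ! Suc m) \<longrightarrow> \<not> in_I R (take k (vs ! m @ vs ! Suc m))"
      using rd mP unfolding right_dec_def by auto
    have lpos: "0 < length (vs ! m @ vs ! Suc m)" using nonemp[of m] mP by simp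
    have len: "length (vs ! m @ vs ! Suc m) = y (Suc (Suc m)) - y m"
      using LSuc[of m] LSuc[of "Suc m"] mP by simp
    have "\<not> in_I R (take (length (vs ! m @ vs ! Suc m) - 1) (vs ! m @ vs ! Suc m))" using c2 diff_less[OF zero_less_one lpos] by blast
    moreover have "take (length (vs ! m @ vs ! Suc m) - 1) (vs ! m @ vs ! Suc m) = sub w (y m) (y (Suc (Suc m)) - 1)"
    proof -
      have "take (y (Suc (Suc m)) - y m - 1) (sub w (y m) (y (Suc (Suc m)))) = sub w (y m) (y m + (y (Suc (Suc m)) - y m - 1))"
        by (rule take_sub) simp
      moreover have "y m + (y (Suc (Suc m)) - y m - 1) = y (Suc (Suc m)) - 1" using RC1[of m] ymono[of "Suc m"] mP by linarith
      ultimately show ?thesis using eq len by simp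
    qed
    ultimately show ?thesis using c1 eq unfolding Iw_def by metis
  qed
  have "y (length vs) = length w" unfolding y_def using cat by simp
  moreover have "1 \<le> length vs \<longrightarrow> y 1 = 1"
    using rd unfolding right_dec_def y_def by (cases vs) auto
  ultimately show ?thesis using RC1 RC2 piece unfolding RC_def y_def by simp
qed

lemma concat_subs:
  assumes "\<forall>m<P. d m \<le> d (Suc m)"
  shows "concat (map (\<lambda>m. sub w (d m) (d (Suc m))) [0..<P]) = sub w (d 0) (d P) \<and> d 0 \<le> d P"
  using assms
proof (induction P)
  case 0 then show ?case unfolding sub_def by simp
next
  case (Suc P)
  hence IH: "concat (map (\<lambda>m. sub w (d m) (d (Suc m))) [0..<P]) = sub w (d 0) (d P)" "d 0 \<le> d P" by auto
  have "d P \<le> d (Suc P)" using Suc.prems by simp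
  have "sub w (d 0) (d (Suc P)) = sub w (d 0) (d P) @ sub w (d P) (d (Suc P))"
    by (rule sub_split[OF IH(2) \<open>d P \<le> d (Suc P)\<close>])
  thus ?case using IH \<open>d P \<le> d (Suc P)\<close> by simp
qed

lemma RC_to_right_dec:
  assumes mo: "monoI (Iw R w)" and rc: "RC (Iw R w) P d" and d0: "d 0 = 0" and dP: "d P = length w"
    and d1: "1 \<le> P \<Longrightarrow> d 1 = 1" and sp: "snd p = w" and ip: "is_path Q p"
  shows "right_dec Q R p (map (\<lambda>m. sub w (d m) (d (Suc m))) [0..<P])"
proof -
  define vs where "vs = map (\<lambda>m. sub w (d m) (d (Suc m))) [0..<P]"
  have inc: "\<forall>m<P. d m \<le> d (Suc m)" using rc unfolding RC_def by (simp add: less_imp_le)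
  have dle: "d m \<le> length w" if "m \<le> P" for m
  proof -
    have "\<forall>m'<P - m. d (m + m') \<le> d (m + Suc m')" using inc that by simp
    from concat_subs[of "P - m" "\<lambda>m'. d (m + m')", OF this] have "d (m + 0) \<le> d (m + (P - m))" by blast
    thus ?thesis using that dP by simp
  qed
  have vsn: "vs ! m = sub w (d m) (d (Suc m))" if "m < P" for m using that unfolding vs_def by simp
  have "concat vs = w" unfolding vs_def using concat_subs[OF inc] d0 dP sub_full by metis
  moreover have "vs \<noteq> [] \<longrightarrow> length (vs ! 0) = 1"
  proof
    assume "vs \<noteq> []"
    hence "1 \<le> P" unfolding vs_def by simp
    thus "length (vs ! 0) = 1" using vsn[of 0] d0 d1 length_sub[OF dle[of 1]] by simp
  qed
  moreover have "\<forall>i<length vs. \<not> in_I R (vs ! i)"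
    using rc vsn unfolding vs_def RC_def Iw_def by simp
  moreover have "\<forall>i. Suc i < length vs \<longrightarrow> in_I R (vs ! i @ vs ! Suc i)
         \<and> (\<forall>k. k < length (vs ! i @ vs ! Suc i) \<longrightarrow> \<not> in_I R (take k (vs ! i @ vs ! Suc i)))"
  proof (intro allI impI conjI)
    fix i k assume h: "Suc i < length vs"
    hence hP: "Suc (Suc i) \<le> P" unfolding vs_def by simp
    have eq: "vs ! i @ vs ! Suc i = sub w (d i) (d (Suc (Suc i)))"
      using vsn[of i] vsn[of "Suc i"] hP sub_split inc by (metis Suc_leD Suc_le_lessD)
    have r2: "Iw R w (d i) (d (Suc (Suc i))) \<and> \<not> Iw R w (d i) (d (Suc (Suc i)) - 1)"
      using rc hP unfolding RC_def by blast
    show "in_I R (vs ! i @ vs ! Suc i)" using eq r2 unfolding Iw_def by simp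
    assume k: "k < length (vs ! i @ vs ! Suc i)"
    have len: "length (vs ! i @ vs ! Suc i) = d (Suc (Suc i)) - d i" using eq length_sub[OF dle[OF hP]] by simp
    have tk: "take k (vs ! i @ vs ! Suc i) = sub w (d i) (d i + k)" using eq k len take_sub[of k "d (Suc (Suc i))" "d i"] by simp
    show "\<not> in_I R (take k (vs ! i @ vs ! Suc i))"
    proof
      assume "in_I R (take k (vs ! i @ vs ! Suc i))"
      hence hI: "Iw R w (d i) (d i + k)" using tk unfolding Iw_def by simp
      have "Iw R w (d i) (d (Suc (Suc i)) - 1)" by (rule monoD[OF mo _ _ hI]) (use k len in auto)
      thus False using r2 by simp
    qed
  qed
  ultimately show ?thesis using ip sp unfolding right_dec_def vs_def by simp
qed



lemma vend:
  assumes "E \<le> length (snd p)"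
  shows "vertex_at Q (vertex_at Q p E, drop E (snd p)) (plen (vertex_at Q p E, drop E (snd p))) = vertex_at Q p (plen p)"
proof (cases "E = length (snd p)")
  case True then show ?thesis unfolding plen_def vertex_at_def by simp
next
  case False
  hence "E < length (snd p)" using assms by simp
  then show ?thesis unfolding plen_def vertex_at_def by (auto simp: nth_drop)
qed

lemma prefix_iff:
  assumes "k \<le> length w" "L \<le> length w"
  shows "(\<exists>w'. w' \<noteq> [] \<and> take L w = take k w @ w') \<longleftrightarrow> k < L"
proof
  assume "\<exists>w'. w' \<noteq> [] \<and> take L w = take k w @ w'"
  then obtain w' where "w' \<noteq> []" "take L w = take k w @ w'" by blast
  hence "length (take L w) = k + length w'" using assms by simp
  thus "k < L" using \<open>w' \<noteq> []\<close> assms by simp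
next
  assume "k < L"
  hence "take L w = take k w @ drop k (take L w)"
    by (metis append_take_drop_id less_imp_le_nat take_take min.absorb1)
  moreover have "drop k (take L w) \<noteq> []" using \<open>k < L\<close> assms by simp
  ultimately show "\<exists>w'. w' \<noteq> [] \<and> take L w = take k w @ w'" by blast
qed

lemma suffix_iff:
  assumes "D \<le> length w" "E \<le> length w"
  shows "(\<exists>w'. w' \<noteq> [] \<and> drop D w = w' @ drop E w) \<longleftrightarrow> D < E"
proof
  assume "\<exists>w'. w' \<noteq> [] \<and> drop D w = w' @ drop E w"
  then obtain w' where "w' \<noteq> []" "drop D w = w' @ drop E w" by blast
  hence "length w - D = length w' + (length w - E)" by (metis length_append length_drop)
  moreover have "length w' > 0" using \<open>w' \<noteq> []\<close> by simp
  ultimately show "D < E" using assms by linarith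
next
  assume "D < E"
  have "drop D w = take (E - D) (drop D w) @ drop (E - D) (drop D w)" by (rule append_take_drop_id[symmetric])
  moreover have "drop (E - D) (drop D w) = drop E w" using \<open>D < E\<close> by simp
  moreover have "take (E - D) (drop D w) \<noteq> []" using \<open>D < E\<close> assms by simp
  ultimately show "\<exists>w'. w' \<noteq> [] \<and> drop D w = w' @ drop E w" by metis
qed

theorem mainTheorem7:
  fixes Q :: "('v, 'a) quiver" and R :: "'a list set"
    and n i j :: int and p q :: "('v, 'a) path" and k :: nat
  assumes "fd_monomial Q R"
    and "n \<ge> 0" and "i \<ge> -1" and "j \<ge> -1" and "i + j = n - 1"
    and "p \<in> Gamma Q R n" and "q \<in> Gamma Q R i"
    and "occurs_at Q p q k"
  shows
   "(odd i \<longrightarrow>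
       (plen (pre_at p k) = 0 \<longleftrightarrow>
        occ_le (sigma Q R n j p) (plen p - plen (sigma Q R n j p))
               (suf_at Q p q k) (k + plen q)))
  \<and> (even i \<longrightarrow>
       (proper_prefix (pre_at p k) (pre_at p (plen p - plen (sigma Q R n (n - 1) p))) \<longleftrightarrow>
        occ_le (sigma Q R n j p) (plen p - plen (sigma Q R n j p))
               (suf_at Q p q k) (k + plen q)))
  \<and> (odd i \<longrightarrow>
       (plen (suf_at Q p q k) = 0 \<longleftrightarrow>
        occ_le (pi Q R n j p) 0 (pre_at p k) 0))
  \<and> (even i \<longrightarrow>
       (proper_suffix Q (suf_at Q p q k) (suf_at Q p (pi Q R n (n - 1) p) 0) \<longleftrightarrow>
        occ_le (pi Q R n j p) 0 (pre_at p k) 0))"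
proof -
  have ne: "\<forall>r\<in>R. r \<noteq> []" using assms(1) unfolding fd_monomial_def by blast
  have mo: "monoI (Iw R (snd p))" by (rule mono_Iw[OF ne])
  define w where "w = snd p"
  have mo': "monoI (Iw R w)" unfolding w_def by (rule mono_Iw[OF ne])
  define N where "N = length w"
  define P where "P = nat (n + 1)"
  define Pq where "Pq = nat (i + 1)"
  define E where "E = k + plen q"
  have P1: "1 \<le> P" using assms(2) unfolding P_def by simp
  have PqP: "Pq \<le> P" using assms(3-5) unfolding P_def Pq_def by simp
  have jP: "nat (j + 1) = P - Pq" using assms(2-5) unfolding P_def Pq_def by simp
  have nP: "nat (n - 1 + 1) = P - 1" using assms(2) unfolding P_def by simp
  have par: "odd i \<longleftrightarrow> even Pq"
  proof -
    have "int Pq = i + 1" using assms(3) unfolding Pq_def by simp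
    hence "even (int Pq) \<longleftrightarrow> odd i" by simp
    thus ?thesis by simp
  qed
  have EN: "E \<le> N" and kE: "k \<le> E" and sq: "snd q = sub w k E"
    using assms(8) unfolding occurs_at_def E_def N_def w_def plen_def sub_def by auto
  obtain us where us: "length us = P" "left_dec Q R p us"
    using assms(6) unfolding Gamma_def P_def by blast
  define c where "c = (\<lambda>m. N - length (concat (take m us)))"
  have wfull: "snd p = sub w 0 N" unfolding w_def N_def by (simp add: sub_full)
  have NN: "N \<le> length w" unfolding N_def by simp
  have LCp: "LC (Iw R w) P c \<and> c 0 = N \<and> c P = 0 \<and> (1 \<le> P \<longrightarrow> Suc (c 1) = N)
     \<and> (\<forall>m<P. us ! m = sub w (c (Suc m)) (c m))"
    using left_chain[OF ne us(2) wfull le0 NN] us(1) unfolding c_def N_def by simp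
  have us_unique: "us' = us" if h: "length us' = P \<and> left_dec Q R p us'" for us'
  proof -
    define c' where "c' = (\<lambda>m. N - length (concat (take m us')))"
    have LCp': "LC (Iw R w) P c' \<and> c' 0 = N \<and> c' P = 0 \<and> (1 \<le> P \<longrightarrow> Suc (c' 1) = N)
       \<and> (\<forall>m<P. us' ! m = sub w (c' (Suc m)) (c' m))"
      using left_chain[OF ne conjunct2[OF h] wfull le0 NN] h unfolding c'_def N_def by simp
    have c11: "c 1 = c' 1" using LCp LCp' P1 by simp
    have eq: "m \<le> P \<Longrightarrow> c m = c' m" for m
      using LC_unique[OF mo', of P c c'] LCp LCp' c11 by simp
    show ?thesis
    proof (rule nth_equalityI)
      show "length us' = length us" using h us by simp
      fix m assume "m < length us'"
      thus "us' ! m = us ! m" using LCp LCp' eq[of m] eq[of "Suc m"] h by simp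
    qed
  qed
  have THEus: "(THE us. length us = nat (n + 1) \<and> left_dec Q R p us) = us"
  proof (rule the_equality)
    show "length us = nat (n + 1) \<and> left_dec Q R p us" using us unfolding P_def by simp
    fix us' assume "length us' = nat (n + 1) \<and> left_dec Q R p us'"
    thus "us' = us" using us_unique unfolding P_def by blast
  qed
  have cle: "length (concat (take t us)) \<le> N" for t
  proof -
    have "concat us = concat (take t us) @ concat (drop t us)" by (simp flip: concat_append)
    hence "length (concat (take t us)) \<le> length (concat us)" by (metis le_add1 length_append)
    moreover have "snd p = concat (rev us)" using us(2) unfolding left_dec_def by blast
    hence "length (concat us) = N" unfolding N_def w_def by (simp add: length_concat_rev)
    ultimately show ?thesis by simp
  qed
  have hsig: "plen (sigma Q R n m p) = N - c (nat (m + 1))" for m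
    unfolding sigma_def THEus Let_def plen_def c_def using cle by (simp add: length_concat_rev)
  obtain uq where uq: "length uq = Pq" "left_dec Q R q uq"
    using assms(7) unfolding Gamma_def Pq_def by blast
  define x where "x = (\<lambda>m. E - length (concat (take m uq)))"
  have LCq: "LC (Iw R w) Pq x \<and> x 0 = E \<and> x Pq = k \<and> (1 \<le> Pq \<longrightarrow> Suc (x 1) = E)"
    using left_chain[OF ne uq(2) sq kE EN[unfolded N_def]] uq(1) unfolding x_def by simp
  have LM: "(even Pq \<longrightarrow> (k = 0 \<longleftrightarrow> E \<le> c (P - Pq)))
       \<and> (odd Pq \<longrightarrow> (k < c (P - 1) \<longleftrightarrow> E \<le> c (P - Pq)))"
    by (rule left_main[OF mo', of P c Pq x E k]) (use LCp LCq PqP in simp_all)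
  define d where "d = dseq (Iw R w) 0"
  have RCp: "RC (Iw R w) P d \<and> d P = N"
    unfolding d_def by (rule LC_to_RC[OF mo', of P c 0 N]) (use LCp in simp_all)
  have d0: "d 0 = 0" and d1: "d 1 = 1" unfolding d_def by simp_all
  define vs where "vs = map (\<lambda>m. sub w (d m) (d (Suc m))) [0..<P]"
  have ip: "is_path Q p" using us(2) unfolding left_dec_def by blast
  have rdp: "right_dec Q R p vs"
    unfolding vs_def by (rule RC_to_right_dec[OF mo']) (use RCp d0 d1 ip in \<open>auto simp: N_def w_def\<close>)
  have lvs: "length vs = P" unfolding vs_def by simp
  have rch: "RC (Iw R w) P (\<lambda>m. length (concat (take m vs))) \<and> length (concat (take 0 vs)) = 0
     \<and> length (concat (take P vs)) = N \<and> (1 \<le> P \<longrightarrow> length (concat (take 1 vs)) = 1)"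
    using right_chain[OF ne rdp w_def[symmetric]] lvs unfolding N_def by simp
  have yd: "m \<le> P \<Longrightarrow> length (concat (take m vs)) = d m" for m
    using RC_unique[OF mo', of P "\<lambda>m. length (concat (take m vs))" d] rch RCp d0 d1 by simp
  have vs_unique: "vs' = vs" if h: "length vs' = P \<and> right_dec Q R p vs'" for vs'
  proof -
    have rch': "RC (Iw R w) P (\<lambda>m. length (concat (take m vs'))) \<and> length (concat (take 0 vs')) = 0
       \<and> (1 \<le> P \<longrightarrow> length (concat (take 1 vs')) = 1)
       \<and> (\<forall>m<P. vs' ! m = sub w (length (concat (take m vs'))) (length (concat (take (Suc m) vs'))))"
      using right_chain[OF ne conjunct2[OF h] w_def[symmetric]] h by simp
    have eq: "m \<le> P \<Longrightarrow> length (concat (take m vs')) = d m" for m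
      using RC_unique[OF mo', of P "\<lambda>m. length (concat (take m vs'))" d] rch' RCp d0 d1 by simp
    show ?thesis
    proof (rule nth_equalityI)
      show "length vs' = length vs" using h lvs by simp
      fix m assume "m < length vs'"
      thus "vs' ! m = vs ! m" using rch' eq[of m] eq[of "Suc m"] h unfolding vs_def by simp
    qed
  qed
  have THEvs: "(THE vs. length vs = nat (n + 1) \<and> right_dec Q R p vs) = vs"
  proof (rule the_equality)
    show "length vs = nat (n + 1) \<and> right_dec Q R p vs" using rdp lvs unfolding P_def by simp
    fix vs' assume "length vs' = nat (n + 1) \<and> right_dec Q R p vs'"
    thus "vs' = vs" using vs_unique unfolding P_def by blast
  qed
  have hpi: "nat (m + 1) \<le> P \<Longrightarrow> plen (pi Q R n m p) = d (nat (m + 1))" for m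
    unfolding pi_def THEvs Let_def plen_def using yd by simp
  define y where "y = dseq (Iw R w) k"
  have RCq: "RC (Iw R w) Pq y \<and> y Pq = E"
    unfolding y_def by (rule LC_to_RC[OF mo', of Pq x k E]) (use LCq in simp_all)
  have y0: "y 0 = k" and y1: "y 1 = Suc k" unfolding y_def by simp_all
  have RM: "(even Pq \<longrightarrow> (E = N \<longleftrightarrow> d (P - Pq) \<le> k))
       \<and> (odd Pq \<longrightarrow> (d (P - 1) < E \<longleftrightarrow> d (P - Pq) \<le> k))"
    by (rule right_main[OF mo', of P d N Pq y k E]) (use RCp RCq y0 y1 PqP EN in simp_all)
  have pN: "plen p = N" unfolding plen_def N_def w_def by simp
  have cN: "c t \<le> N" for t unfolding c_def by simp
  have dN: "d t \<le> N" if "t \<le> P" for t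
  proof -
    have "concat vs = concat (take t vs) @ concat (drop t vs)" by (simp flip: concat_append)
    hence "length (concat (take t vs)) \<le> length (concat vs)" by (metis le_add1 length_append)
    moreover have "length (concat vs) = N" using rch lvs by simp
    ultimately show ?thesis using yd[OF that] by simp
  qed
  have kN: "k \<le> N" using kE EN by simp
  have sj: "plen (sigma Q R n j p) = N - c (P - Pq)" using hsig[of j] jP by simp
  have sn: "plen (sigma Q R n (n - 1) p) = N - c (P - 1)" using hsig[of "n - 1"] nP by simp
  have pj: "plen (pi Q R n j p) = d (P - Pq)" using hpi[of j] jP by simp
  have pn: "plen (pi Q R n (n - 1) p) = d (P - 1)" using hpi[of "n - 1"] nP by simp
  have plq: "plen q = E - k" unfolding E_def by simp
  have psuf: "plen (suf_at Q p q k) = N - E" unfolding suf_at_def plen_def E_def N_def w_def by simp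
  have ppre: "plen (pre_at p k) = k" unfolding pre_at_def plen_def using kN unfolding N_def w_def by simp
  have occS: "occ_le (sigma Q R n j p) (plen p - plen (sigma Q R n j p)) (suf_at Q p q k) (k + plen q)
       \<longleftrightarrow> E \<le> c (P - Pq)"
    unfolding occ_le_def using sj pN psuf cN[of "P - Pq"] EN kE unfolding E_def by auto
  have occP: "occ_le (pi Q R n j p) 0 (pre_at p k) 0 \<longleftrightarrow> d (P - Pq) \<le> k"
    unfolding occ_le_def using pj ppre by simp
  have pp: "proper_prefix (pre_at p k) (pre_at p (plen p - plen (sigma Q R n (n - 1) p))) \<longleftrightarrow> k < c (P - 1)"
  proof -
    have "plen p - plen (sigma Q R n (n - 1) p) = c (P - 1)" using sn pN cN[of "P - 1"] by simp
    thus ?thesis unfolding proper_prefix_def pre_at_def using prefix_iff[of k w "c (P - 1)"] kN cN[of "P - 1"]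
      unfolding N_def w_def by simp
  qed
  have ps: "proper_suffix Q (suf_at Q p q k) (suf_at Q p (pi Q R n (n - 1) p) 0) \<longleftrightarrow> d (P - 1) < E"
  proof -
    have dP1: "d (P - 1) \<le> N" using dN[of "P - 1"] by simp
    have v1: "vertex_at Q (suf_at Q p q k) (plen (suf_at Q p q k)) = vertex_at Q p (plen p)"
      unfolding suf_at_def using vend[of E p Q] EN unfolding E_def N_def w_def by simp
    have v2: "vertex_at Q (suf_at Q p (pi Q R n (n - 1) p) 0) (plen (suf_at Q p (pi Q R n (n - 1) p) 0)) = vertex_at Q p (plen p)"
      unfolding suf_at_def using vend[of "d (P - 1)" p Q] dP1 pn unfolding N_def w_def by simp
    show ?thesis unfolding proper_suffix_def using v1 v2 suffix_iff[of "d (P - 1)" w E] dP1 EN pn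
      unfolding suf_at_def N_def w_def E_def by simp
  qed
  show ?thesis
    using LM RM par occS occP pp ps psuf ppre EN by auto
qed


end
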